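(* Let $m>2$ be odd and $n>0$ even, with $\gcd(m,n)=1$. A tuple $\mathbf{a}=(a_0,\dots,a_{n-1})\in\mathbf{Z}_m^n$ belongs to $\mathcal{C}_m^n$ if and only if $\sigma(\mathbf{a})=\sum_{i=0}^{n-1}(-1)^ia_i\equiv0\pmod m$.
   Context: $\mathbf{Z}_m$ denotes the integers modulo $m$. $T:\mathbf{Z}_m^n\to\mathbf{Z}_m^n$ is $T(a_0,\dots,a_{n-1})=(a_0+a_1,a_1+a_2,\dots,a_{n-1}+a_0)$. $\mathcal{C}_m^n$ is the set of tuples lying in a cycle of some sequence $(T^k\mathbf{b})_{k\ge0}$, i.e. the set of $\mathbf{a}\in\mathbf{Z}_m^n$ such that $T^P\mathbf{a}=\mathbf{a}$ for some positive integer $P$. *)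

theory Defs
  imports Main
begin

text \<open>Elements of Z_m^n are represented as functions a :: nat => int with
 a i in {0..<m} for i < n and a i = 0 for i >= n (canonical representatives).\<close>

definition tuples :: "nat \<Rightarrow> nat \<Rightarrow> (nat \<Rightarrow> int) set" where
  "tuples m n = {a. (\<forall>i<n. 0 \<le> a i \<and> a i < int m) \<and> (\<forall>i\<ge>n. a i = 0)}"

definition ducciT :: "nat \<Rightarrow> nat \<Rightarrow> (nat \<Rightarrow> int) \<Rightarrow> (nat \<Rightarrow> int)" where
  "ducciT m n a = (\<lambda>i. if i < n then (a i + a ((i + 1) mod n)) mod int m else 0)"

definition cyc :: "nat \<Rightarrow> nat \<Rightarrow> (nat \<Rightarrow> int) set" where
  "cyc m n = {a \<in> tuples m n. \<exists>P>0. (ducciT m n ^^ P) a = a}"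

end

theory Submission
  imports Defs
begin

lemma periodic_of_inj:
  assumes fin: "finite K" and into: "\<And>x. x \<in> K \<Longrightarrow> f x \<in> K"
    and inj: "inj_on f K" and aK: "a \<in> K"
  shows "\<exists>P>0. (f ^^ P) a = a"
proof -
  have gK: "(f ^^ k) a \<in> K" for k by (induction k) (auto simp: aK into)
  have injk: "x = y" if "x \<in> K" "y \<in> K" "(f ^^ k) x = (f ^^ k) y" for k x y
    using that
  proof (induction k arbitrary: x y)
    case 0 then show ?case by simp
  next
    case (Suc k)
    have "(f ^^ k) (f x) = (f ^^ k) (f y)" using Suc.prems(3) by (simp only: funpow_Suc_right o_apply)
    then have "f x = f y" using Suc.IH Suc.prems into by blast
    then show ?case using inj Suc.prems by (meson inj_on_def)
  qed
  have "\<not> inj_on (\<lambda>k. (f ^^ k) a) {..card K}"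
  proof
    assume h: "inj_on (\<lambda>k. (f ^^ k) a) {..card K}"
    have "(\<lambda>k. (f ^^ k) a) ` {..card K} \<subseteq> K" using gK by auto
    then have "card ((\<lambda>k. (f ^^ k) a) ` {..card K}) \<le> card K" using fin by (simp add: card_mono)
    then show False using h by (simp add: card_image)
  qed
  then obtain i j where ij: "i \<noteq> j" "(f ^^ i) a = (f ^^ j) a"
    unfolding inj_on_def by blast
  have "\<exists>i j. i < j \<and> (f ^^ i) a = (f ^^ j) a"
    using ij by (metis linorder_neqE_nat)
  then obtain i j where ij2: "i < j" "(f ^^ i) a = (f ^^ j) a" by blast
  have "(f ^^ j) a = (f ^^ i) ((f ^^ (j - i)) a)"
    using ij2(1) by (metis funpow_add le_add_diff_inverse less_imp_le o_apply)
  then have "(f ^^ (j - i)) a = a" using injk[of "(f ^^ (j - i)) a" a i] ij2 gK aK by simp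
  then show ?thesis using ij2(1) by (intro exI[of _ "j - i"]) simp
qed


lemma T_tuples:
  assumes "m > 0" shows "ducciT m n a \<in> tuples m n"
  using assms by (auto simp: ducciT_def tuples_def)

lemma finite_tuples: "finite (tuples m n)"
proof -
  have "tuples m n \<subseteq> (\<lambda>xs i. if i < n then xs ! i else 0) ` {xs. set xs \<subseteq> {0..<int m} \<and> length xs = n}"
  proof
    fix a assume a: "a \<in> tuples m n"
    have "a = (\<lambda>i. if i < n then map a [0..<n] ! i else 0)"
      using a by (auto simp: tuples_def)
    moreover have "map a [0..<n] \<in> {xs. set xs \<subseteq> {0..<int m} \<and> length xs = n}"
      using a by (auto simp: tuples_def)
    ultimately show "a \<in> (\<lambda>xs i. if i < n then xs ! i else 0) ` {xs. set xs \<subseteq> {0..<int m} \<and> length xs = n}"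
      by blast
  qed
  moreover have "finite {xs. set xs \<subseteq> {0..<int m} \<and> length xs = n}"
    by (rule finite_lists_length_eq) simp
  ultimately show ?thesis by (meson finite_imageI finite_subset)
qed

lemma sigma_shift:
  fixes a :: "nat \<Rightarrow> int"
  assumes "n > 0" "even n"
  shows "(\<Sum>i<n. (-1) ^ i * a ((i + 1) mod n)) = - (\<Sum>i<n. (-1) ^ i * a i)"
proof -
  obtain k where k: "n = Suc k" using assms by (cases n) auto
  have ok: "odd k" using assms k by simp
  have "(\<Sum>i<n. (-1) ^ i * a ((i + 1) mod n)) = (\<Sum>i<k. (-1) ^ i * a ((i + 1) mod n)) + (-1)^k * a 0"
    using k by simp
  also have "(\<Sum>i<k. (-1) ^ i * a ((i + 1) mod n)) = (\<Sum>i<k. (-1) ^ i * a (Suc i))"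
    using k by (intro sum.cong) auto
  also have "(-1::int)^k = -1" using ok by simp
  finally have 1: "(\<Sum>i<n. (-1) ^ i * a ((i + 1) mod n)) = (\<Sum>i<k. (-1) ^ i * a (Suc i)) - a 0"
    by simp
  have 2: "(\<Sum>i<n. (-1) ^ i * a i) = (\<Sum>i<k. (-1) ^ Suc i * a (Suc i)) + a 0"
    unfolding k sum.lessThan_Suc_shift by simp
  have 3: "(\<Sum>i<k. (-1::int) ^ Suc i * a (Suc i)) = - (\<Sum>i<k. (-1) ^ i * a (Suc i))"
    by (simp add: sum_negf[symmetric])
  show ?thesis using 1 2 3 by simp
qed

lemma sigma_T:
  fixes a :: "nat \<Rightarrow> int"
  assumes "n > 0" "even n"
  shows "(\<Sum>i<n. (-1) ^ i * ducciT m n a i) mod int m = 0"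
proof -
  let ?x = "\<lambda>i. a i + a ((i + 1) mod n)"
  have "int m dvd (\<Sum>i<n. (-1) ^ i * ducciT m n a i) - (\<Sum>i<n. (-1) ^ i * ?x i)"
    unfolding sum_subtractf[symmetric]
  proof (rule dvd_sum)
    fix i assume "i \<in> {..<n}"
    then have "(-1) ^ i * ducciT m n a i - (-1) ^ i * ?x i = (-1)^i * (?x i mod int m - ?x i)"
      by (simp add: ducciT_def algebra_simps)
    moreover have "int m dvd (?x i mod int m - ?x i)"
      by (metis dvd_minus_iff minus_diff_eq mod_0_imp_dvd mod_diff_left_eq diff_self mod_0)
    ultimately show "int m dvd (-1) ^ i * ducciT m n a i - (-1) ^ i * ?x i" by simp
  qed
  moreover have "(\<Sum>i<n. (-1) ^ i * ?x i) = 0"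
    using sigma_shift[OF assms, of a] by (simp add: algebra_simps sum.distrib)
  ultimately show ?thesis by simp
qed


lemma T_inj:
  fixes a b :: "nat \<Rightarrow> int"
  assumes m: "m > 0" and n: "n > 0" and cop: "coprime m n"
    and a: "a \<in> tuples m n" and b: "b \<in> tuples m n"
    and sa: "(\<Sum>i<n. (-1) ^ i * a i) mod int m = 0"
    and sb: "(\<Sum>i<n. (-1) ^ i * b i) mod int m = 0"
    and eq: "ducciT m n a = ducciT m n b"
  shows "a = b"
proof -
  define d where "d i = a i - b i" for i
  have step: "int m dvd d i + d (Suc i)" if "Suc i < n" for i
  proof -
    have "ducciT m n a i = ducciT m n b i" using eq by simp
    then have "(a i + a (Suc i)) mod int m = (b i + b (Suc i)) mod int m"
      using that by (simp add: ducciT_def)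
    then have "int m dvd (a i + a (Suc i)) - (b i + b (Suc i))"
      by (simp add: mod_eq_dvd_iff)
    then show ?thesis by (simp add: d_def algebra_simps)
  qed
  have alt: "int m dvd d i - (-1)^i * d 0" if "i < n" for i
    using that
  proof (induction i)
    case 0 then show ?case by simp
  next
    case (Suc i)
    have "d (Suc i) - (-1)^Suc i * d 0 = (d i + d (Suc i)) - (d i - (-1)^i * d 0)"
      by simp
    then show ?case using Suc step by (metis Suc_lessD dvd_diff)
  qed
  have "int m dvd (\<Sum>i<n. (-1)^i * (d i - (-1)^i * d 0))"
    by (rule dvd_sum) (use alt in auto)
  moreover have sumid: "(\<Sum>i<n. (-1)^i * (d i - (-1)^i * d 0)) =
      (\<Sum>i<n. (-1) ^ i * a i) - (\<Sum>i<n. (-1) ^ i * b i) - int n * d 0"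
  proof -
    have "(\<Sum>i<n. (-1)^i * (d i - (-1)^i * d 0)) = (\<Sum>i<n. (-1)^i * a i - (-1)^i * b i - d 0)"
    proof (intro sum.cong refl)
      fix i
      have pp: "(-1::int)^i * (-1)^i = 1"
        by (metis power_mult_distrib mult_minus_left mult_1_left minus_minus power_one)
      have "(-1::int)^i * (d i - (-1)^i * d 0) = (-1)^i * d i - ((-1)^i * (-1)^i) * d 0"
        by (simp only: right_diff_distrib mult.assoc)
      also have "... = (-1)^i * a i - (-1)^i * b i - d 0"
        by (simp only: pp d_def right_diff_distrib mult_1_left)
      finally show "(-1::int)^i * (d i - (-1)^i * d 0) = (-1)^i * a i - (-1)^i * b i - d 0" .
    qed
    then show ?thesis by (simp add: sum_subtractf)
  qed
  moreover have "int m dvd (\<Sum>i<n. (-1) ^ i * a i)" "int m dvd (\<Sum>i<n. (-1) ^ i * b i)"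
    using sa sb by auto
  ultimately have "int m dvd ((\<Sum>i<n. (-1) ^ i * a i) - (\<Sum>i<n. (-1) ^ i * b i)) - (\<Sum>i<n. (-1)^i * (d i - (-1)^i * d 0))"
    by (intro dvd_diff) simp_all
  moreover have "((\<Sum>i<n. (-1) ^ i * a i) - (\<Sum>i<n. (-1) ^ i * b i)) - (\<Sum>i<n. (-1)^i * (d i - (-1)^i * d 0)) = int n * d 0"
    using sumid by simp
  ultimately have "int m dvd int n * d 0" by simp
  moreover have "coprime (int m) (int n)" using cop by simp
  ultimately have d0: "int m dvd d 0" using coprime_dvd_mult_right_iff by blast
  show ?thesis
  proof
    fix i
    show "a i = b i"
    proof (cases "i < n")
      case True
      have "int m dvd d i" 
      proof -
        have "d i = (d i - (-1)^i * d 0) + (-1)^i * d 0" by simp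
        moreover have "int m dvd (d i - (-1)^i * d 0) + (-1)^i * d 0"
          using alt[OF True] d0 by (intro dvd_add dvd_mult) simp_all
        ultimately show ?thesis by simp
      qed
      moreover have "0 \<le> a i" "a i < int m" "0 \<le> b i" "b i < int m"
        using a b True by (auto simp: tuples_def)
      ultimately have "a i mod int m = b i mod int m" unfolding d_def by (simp only: mod_eq_dvd_iff)
      moreover have "a i mod int m = a i" "b i mod int m = b i"
        using \<open>0 \<le> a i\<close> \<open>a i < int m\<close> \<open>0 \<le> b i\<close> \<open>b i < int m\<close> by simp_all
      ultimately show ?thesis by simp
    next
      case False then show ?thesis using a b by (auto simp: tuples_def)
    qed
  qed
qed

theorem proposition6p2:
  fixes m n :: nat and a :: "nat \<Rightarrow> int"
  assumes "m > 2" and "odd m" and "n > 0" and "even n" and "coprime m n"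
    and "a \<in> tuples m n"
  shows "a \<in> cyc m n \<longleftrightarrow> (\<Sum>i<n. (-1) ^ i * a i) mod int m = 0"
proof
  assume "a \<in> cyc m n"
  then obtain P where P: "P > 0" "(ducciT m n ^^ P) a = a" by (auto simp: cyc_def)
  then obtain Q where "P = Suc Q" by (cases P) auto
  then have "a = ducciT m n ((ducciT m n ^^ Q) a)" using P by simp
  then show "(\<Sum>i<n. (-1) ^ i * a i) mod int m = 0"
    using sigma_T[OF assms(3,4), of m "(ducciT m n ^^ Q) a"] by simp
next
  assume s: "(\<Sum>i<n. (-1) ^ i * a i) mod int m = 0"
  define K where "K = {b \<in> tuples m n. (\<Sum>i<n. (-1) ^ i * b i) mod int m = 0}"
  have m0: "m > 0" using assms by simp
  have "\<exists>P>0. (ducciT m n ^^ P) a = a"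
  proof (rule periodic_of_inj)
    show "finite K" unfolding K_def using finite_tuples by simp
    show "ducciT m n x \<in> K" if "x \<in> K" for x
      unfolding K_def using T_tuples[OF m0, of n x] sigma_T[OF assms(3,4), of m x] by simp
    show "inj_on (ducciT m n) K"
    proof (rule inj_onI)
      fix x y assume "x \<in> K" "y \<in> K" "ducciT m n x = ducciT m n y"
      then show "x = y" unfolding K_def using T_inj[OF m0 assms(3,5), of x y] by simp
    qed
    show "a \<in> K" unfolding K_def using assms(6) s by simp
  qed
  then show "a \<in> cyc m n" using assms(6) by (simp add: cyc_def)
qed

end
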